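(* Let $(\omega,c)\in\mathbb{R}^2$ satisfy: $\omega>c^2/4$, or $\omega=c^2/4$ and $c>0$. Then the function $(\alpha_0,\alpha_1)\ni\eta_3\mapsto\eta_2\in(0,\alpha_0)$, where $\eta_2=\frac{-\eta_3+4c+\sqrt{A(\eta_3)}}{2}$, is strictly decreasing.
   Context: $\alpha_0=\tfrac13(4c+\sqrt{48\omega+4c^2})$, $\alpha_1=4\sqrt\omega+2c$, $A(x)=-3x^2+8cx+64\omega$ (positive on $(\alpha_0,\alpha_1)$). For fixed $\eta_3$, $\eta_2$ is the value satisfying $\eta_2^2+\eta_3^2+\eta_2\eta_3-4c(\eta_2+\eta_3)-16(\omega-c^2/4)=0$ given by the formula above. *)

theory Defs
  imports Complex_Main
begin

definition alpha0 :: "real \<Rightarrow> real \<Rightarrow> real" where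
  "alpha0 \<omega> c = (4 * c + sqrt (48 * \<omega> + 4 * c^2)) / 3"

definition alpha1 :: "real \<Rightarrow> real \<Rightarrow> real" where
  "alpha1 \<omega> c = 4 * sqrt \<omega> + 2 * c"

definition Apoly :: "real \<Rightarrow> real \<Rightarrow> real \<Rightarrow> real" where
  "Apoly \<omega> c x = - 3 * x^2 + 8 * c * x + 64 * \<omega>"

definition eta2 :: "real \<Rightarrow> real \<Rightarrow> real \<Rightarrow> real" where
  "eta2 \<omega> c \<eta>3 = (- \<eta>3 + 4 * c + sqrt (Apoly \<omega> c \<eta>3)) / 2"

end

theory Submission
  imports Defs
begin

lemma mono_eta2:
  fixes \<omega> c x y :: real
  assumes "4*c/3 \<le> x" "x < y"
  shows "eta2 \<omega> c y < eta2 \<omega> c x"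
proof -
  have "Apoly \<omega> c x - Apoly \<omega> c y = (y-x)*(3*(x+y)-8*c)"
    unfolding Apoly_def by (simp add: algebra_simps power2_eq_square)
  also have "\<dots> \<ge> 0" using assms by (intro mult_nonneg_nonneg) auto
  finally have "sqrt (Apoly \<omega> c y) \<le> sqrt (Apoly \<omega> c x)" by simp
  hence "- y + 4 * c + sqrt (Apoly \<omega> c y) < - x + 4 * c + sqrt (Apoly \<omega> c x)" using assms by linarith
  thus ?thesis unfolding eta2_def by (simp add: divide_strict_right_mono)
qed

theorem lemma3p3:
  fixes \<omega> c :: real
  assumes "\<omega> > c^2 / 4 \<or> (\<omega> = c^2 / 4 \<and> c > 0)"
  shows "(\<forall>x \<in> {alpha0 \<omega> c <..< alpha1 \<omega> c}. eta2 \<omega> c x \<in> {0 <..< alpha0 \<omega> c})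
       \<and> (\<forall>x \<in> {alpha0 \<omega> c <..< alpha1 \<omega> c}. \<forall>y \<in> {alpha0 \<omega> c <..< alpha1 \<omega> c}.
            x < y \<longrightarrow> eta2 \<omega> c y < eta2 \<omega> c x)"
proof -
  define q where "q = sqrt (48 * \<omega> + 4 * c^2)"
  define s where "s = sqrt \<omega>"
  have w0: "\<omega> \<ge> 0" proof -
    have "c^2/4 \<ge> 0" by simp
    thus ?thesis using assms by linarith
  qed
  have qa: "48 * \<omega> + 4 * c^2 \<ge> 0" using w0 zero_le_power2[of c] by linarith
  have q0: "q \<ge> 0" using qa unfolding q_def by simp
  have qq: "q^2 = 48 * \<omega> + 4 * c^2" using qa unfolding q_def by simp
  have s0: "s \<ge> 0" using w0 unfolding s_def by simp
  have ss: "s^2 = \<omega>" using w0 unfolding s_def by simp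
  have a0: "alpha0 \<omega> c = (4*c+q)/3" unfolding alpha0_def q_def by simp
  have a1: "alpha1 \<omega> c = 4*s+2*c" unfolding alpha1_def s_def by simp
  have a0ge: "4*c/3 \<le> alpha0 \<omega> c" using a0 q0 by simp
  have Aa0: "Apoly \<omega> c (alpha0 \<omega> c) = q^2"
    using qq unfolding a0 Apoly_def by (simp add: field_simps power2_eq_square)
  have e0: "eta2 \<omega> c (alpha0 \<omega> c) = alpha0 \<omega> c"
    unfolding eta2_def Aa0 using q0 a0 by simp
  have mono: "\<forall>x \<in> {alpha0 \<omega> c <..< alpha1 \<omega> c}. \<forall>y \<in> {alpha0 \<omega> c <..< alpha1 \<omega> c}.
            x < y \<longrightarrow> eta2 \<omega> c y < eta2 \<omega> c x"
    using mono_eta2 a0ge by force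
  have cs: "c \<le> 2*s"
  proof -
    have "c^2 \<le> (2*s)^2" using assms ss by (auto simp: power_mult_distrib)
    hence "\<bar>c\<bar> \<le> \<bar>2*s\<bar>" using abs_le_square_iff by blast
    thus ?thesis using s0 by simp
  qed
  have cs2: "-c \<le> 2*s"
  proof -
    have "c^2 \<le> (2*s)^2" using assms ss by (auto simp: power_mult_distrib)
    hence "\<bar>c\<bar> \<le> \<bar>2*s\<bar>" using abs_le_square_iff by blast
    thus ?thesis using s0 by simp
  qed
  have range: "eta2 \<omega> c x \<in> {0 <..< alpha0 \<omega> c}"
    if x: "alpha0 \<omega> c < x" "x < alpha1 \<omega> c" for x
  proof -
    have u: "eta2 \<omega> c x < alpha0 \<omega> c" using mono_eta2[OF a0ge x(1), of \<omega>] e0 by simp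
    have "x - 4*c < sqrt (Apoly \<omega> c x)"
    proof -
      have qc: "2*c \<le> q"
      proof -
        have "(2*c)^2 \<le> q^2" using qq w0 by (simp add: power_mult_distrib)
        hence "\<bar>2*c\<bar> \<le> \<bar>q\<bar>" using abs_le_square_iff by blast
        thus ?thesis using q0 by simp
      qed
      have xl: "x < 4*s+2*c" using x a1 by simp
      have "3 * alpha0 \<omega> c = 4*c+q" using a0 by simp
      hence xg: "x > 2*c - 4*s" using x qc s0 by linarith
      have "Apoly \<omega> c x - (x-4*c)^2 = 4*(4*s+2*c-x)*(x-(2*c-4*s))"
        unfolding Apoly_def ss[symmetric] by (simp add: algebra_simps power2_eq_square)
      also have "\<dots> > 0" using xl xg by (intro mult_pos_pos) auto
      finally have "(x-4*c)^2 < Apoly \<omega> c x" by simp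
      hence "sqrt ((x-4*c)^2) < sqrt (Apoly \<omega> c x)" by (rule real_sqrt_less_mono)
      thus ?thesis by simp
    qed
    hence "0 < eta2 \<omega> c x" unfolding eta2_def by simp
    thus ?thesis using u by simp
  qed
  show ?thesis using mono range by auto
qed

end
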